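(* For any vector $|\psi\rangle\in\mathbb{C}^d$ and any positive semidefinite operators $P_1,P_2$ on $\mathbb{C}^d$, $$\langle\psi|P_1|\psi\rangle^2+\langle\psi|P_2|\psi\rangle^2\le\langle\psi|\sqrt{P_1^2+P_2^2}|\psi\rangle^2.$$ *)

theory Defs
  imports Complex_Main "Jordan_Normal_Form.Schur_Decomposition"
begin

definition braket :: "complex vec \<Rightarrow> complex mat \<Rightarrow> complex" where
  "braket v A = (\<Sum>i<dim_vec v. cnj (vec_index v i) * vec_index (A *\<^sub>v v) i)"

definition psd :: "complex mat \<Rightarrow> bool" where
  "psd A \<longleftrightarrow> A \<in> carrier_mat (dim_row A) (dim_row A) \<and> mat_adjoint A = A \<and>
     (\<forall>v \<in> carrier_vec (dim_row A). Re (braket v A) \<ge> 0 \<and> Im (braket v A) = 0)"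

definition psd_sqrt :: "complex mat \<Rightarrow> complex mat" where
  "psd_sqrt A = (THE S. psd S \<and> dim_row S = dim_row A \<and> S * S = A)"

end

theory Submission
  imports Defs "Jordan_Normal_Form.Spectral_Radius"
begin

definition ipn :: "nat \<Rightarrow> complex vec \<Rightarrow> complex vec \<Rightarrow> complex" where
  "ipn n v w = (\<Sum>i<n. cnj (v $ i) * w $ i)"

definition herm :: "nat \<Rightarrow> complex mat \<Rightarrow> bool" where
  "herm n A \<longleftrightarrow> A \<in> carrier_mat n n \<and> (\<forall>i<n. \<forall>j<n. A $$ (i,j) = cnj (A $$ (j,i)))"

definition ON :: "nat \<Rightarrow> nat \<Rightarrow> (nat \<Rightarrow> complex vec) \<Rightarrow> bool" where
  "ON n k u \<longleftrightarrow> (\<forall>i<k. u i \<in> carrier_vec n) \<and>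
     (\<forall>i<k. \<forall>j<k. ipn n (u i) (u j) = (if i = j then 1 else 0))"

lemma adj_dims: "dim_row (mat_adjoint A) = dim_col A" "dim_col (mat_adjoint A) = dim_row A"
  unfolding mat_adjoint_def by (simp_all add: mat_of_rows_def)

lemma adj_idx: "i < dim_col A \<Longrightarrow> j < dim_row A \<Longrightarrow> mat_adjoint A $$ (i,j) = cnj (A $$ (j,i))"
  unfolding mat_adjoint_def by (simp add: mat_of_rows_def)

lemma adjoint_herm:
  assumes "A \<in> carrier_mat n n"
  shows "mat_adjoint A = A \<longleftrightarrow> herm n A"
proof
  assume h: "mat_adjoint A = A"
  show "herm n A" unfolding herm_def
  proof (intro conjI allI impI)
    show "A \<in> carrier_mat n n" by (rule assms)
    fix i j assume ij: "i < n" "j < n"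
    have "mat_adjoint A $$ (i,j) = cnj (A $$ (j,i))"
      using assms ij by (intro adj_idx) auto
    then show "A $$ (i,j) = cnj (A $$ (j,i))" using h by simp
  qed
next
  assume h: "herm n A"
  show "mat_adjoint A = A"
  proof (rule eq_matI)
    fix i j assume ij: "i < dim_row A" "j < dim_col A"
    have "mat_adjoint A $$ (i,j) = cnj (A $$ (j,i))"
      using assms ij by (intro adj_idx) auto
    moreover have ij': "i < n" "j < n" using ij assms by auto
    have "A $$ (i,j) = cnj (A $$ (j,i))" using h ij' unfolding herm_def by blast
    ultimately show "mat_adjoint A $$ (i,j) = A $$ (i,j)" by simp
  qed (use assms in \<open>simp_all add: adj_dims\<close>)
qed

lemma herm_cnj: "herm n A \<Longrightarrow> i < n \<Longrightarrow> j < n \<Longrightarrow> cnj (A $$ (i,j)) = A $$ (j,i)"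
  unfolding herm_def by (metis complex_cnj_cnj)

lemma mult_vec_idx: assumes "A \<in> carrier_mat n m" "w \<in> carrier_vec m" "i < n"
  shows "(A *\<^sub>v w) $ i = (\<Sum>j<m. A $$ (i,j) * w $ j)"
  using assms by (simp add: scalar_prod_def lessThan_atLeast0)

lemma ipn_mult_vec:
  assumes "A \<in> carrier_mat n n" "w \<in> carrier_vec n"
  shows "ipn n v (A *\<^sub>v w) = (\<Sum>i<n. \<Sum>j<n. cnj (v $ i) * A $$ (i,j) * w $ j)"
  unfolding ipn_def
  by (rule sum.cong[OF refl]) (simp add: mult_vec_idx[OF assms] sum_distrib_left mult.assoc)

lemma herm_carrier: "herm n A \<Longrightarrow> A \<in> carrier_mat n n" unfolding herm_def by auto

lemma herm_ip:
  assumes "herm n A" "v \<in> carrier_vec n" "w \<in> carrier_vec n"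
  shows "ipn n (A *\<^sub>v v) w = ipn n v (A *\<^sub>v w)"
proof -
  have A: "A \<in> carrier_mat n n" using assms(1) by (rule herm_carrier)
  have "ipn n (A *\<^sub>v v) w = (\<Sum>i<n. \<Sum>j<n. cnj (A $$ (i,j)) * cnj (v $ j) * w $ i)"
    unfolding ipn_def
    by (rule sum.cong[OF refl]) (simp add: mult_vec_idx[OF A assms(2)] sum_distrib_right)
  also have "\<dots> = (\<Sum>i<n. \<Sum>j<n. cnj (v $ j) * A $$ (j,i) * w $ i)"
    by (intro sum.cong refl) (simp add: herm_cnj[OF assms(1)] mult.commute)
  also have "\<dots> = (\<Sum>j<n. \<Sum>i<n. cnj (v $ j) * A $$ (j,i) * w $ i)"
    by (rule sum.swap)
  also have "\<dots> = ipn n v (A *\<^sub>v w)" using ipn_mult_vec[OF A assms(3)] by simp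
  finally show ?thesis .
qed

lemma ipn_cnj: "ipn n w v = cnj (ipn n v w)"
  unfolding ipn_def by (simp add: mult.commute)

lemma ipn_self_real: "ipn n v v = of_real (\<Sum>i<n. (cmod (v $ i))\<^sup>2)"
  unfolding ipn_def of_real_sum by (intro sum.cong refl) (metis complex_norm_square mult.commute)

lemma ipn_self_nonneg: "Re (ipn n v v) \<ge> 0" "Im (ipn n v v) = 0"
  unfolding ipn_self_real by (auto intro: sum_nonneg)

lemma ipn_self_zero:
  assumes "v \<in> carrier_vec n" "ipn n v v = 0" shows "v = 0\<^sub>v n"
proof -
  have "of_real (\<Sum>i<n. (cmod (v $ i))\<^sup>2) = (0::complex)" using assms(2) ipn_self_real by metis
  then have "(\<Sum>i<n. (cmod (v $ i))\<^sup>2) = 0" by (simp only: of_real_eq_0_iff)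
  then have "\<forall>i\<in>{..<n}. (cmod (v $ i))\<^sup>2 = 0" by (subst (asm) sum_nonneg_eq_0_iff) auto
  then show ?thesis using assms(1) by (intro eq_vecI) auto
qed

lemma ipn_zero_right[simp]: "ipn n v (0\<^sub>v n) = 0"
  unfolding ipn_def by simp

lemma ipn_smult_right: "w \<in> carrier_vec n \<Longrightarrow> ipn n v (c \<cdot>\<^sub>v w) = c * ipn n v w"
  unfolding ipn_def by (simp add: sum_distrib_left algebra_simps)

lemma ipn_smult_left: "v \<in> carrier_vec n \<Longrightarrow> ipn n (c \<cdot>\<^sub>v v) w = cnj c * ipn n v w"
  unfolding ipn_def by (simp add: sum_distrib_left algebra_simps)

lemma ipn_add_right: "w \<in> carrier_vec n \<Longrightarrow> x \<in> carrier_vec n \<Longrightarrow> ipn n v (w + x) = ipn n v w + ipn n v x"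
  unfolding ipn_def by (simp add: distrib_left sum.distrib)

lemma ipn_lincomb:
  assumes "finite J"
  shows "ipn n x (vec n (\<lambda>a. \<Sum>j\<in>J. f j * y j $ a)) = (\<Sum>j\<in>J. f j * ipn n x (y j))"
proof -
  have "ipn n x (vec n (\<lambda>a. \<Sum>j\<in>J. f j * y j $ a)) = (\<Sum>a<n. \<Sum>j\<in>J. cnj (x $ a) * (f j * y j $ a))"
    unfolding ipn_def by (simp add: sum_distrib_left)
  also have "\<dots> = (\<Sum>j\<in>J. \<Sum>a<n. f j * (cnj (x $ a) * y j $ a))"
    by (subst sum.swap) (simp add: algebra_simps)
  also have "\<dots> = (\<Sum>j\<in>J. f j * ipn n x (y j))"
    unfolding ipn_def by (simp add: sum_distrib_left)
  finally show ?thesis .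
qed

lemma ON_complete:
  assumes "ON n n u" "a < n" "b < n"
  shows "(\<Sum>i<n. u i $ a * cnj (u i $ b)) = (if a = b then 1 else 0)"
proof -
  define U where "U = mat n n (\<lambda>(a,i). u i $ a)"
  define V where "V = mat n n (\<lambda>(i,b). cnj (u i $ b))"
  have U: "U \<in> carrier_mat n n" and V: "V \<in> carrier_mat n n" unfolding U_def V_def by auto
  have "V * U = 1\<^sub>m n"
  proof (rule eq_matI)
    fix i j assume ij: "i < dim_row (1\<^sub>m n)" "j < dim_col (1\<^sub>m n)"
    then have "(V * U) $$ (i,j) = (\<Sum>a<n. cnj (u i $ a) * u j $ a)"
      unfolding U_def V_def by (simp add: scalar_prod_def lessThan_atLeast0)
    also have "\<dots> = ipn n (u i) (u j)" unfolding ipn_def ..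
    also have "\<dots> = 1\<^sub>m n $$ (i,j)" using assms(1) ij unfolding ON_def by auto
    finally show "(V * U) $$ (i,j) = 1\<^sub>m n $$ (i,j)" .
  qed (auto simp: U_def V_def)
  then have UV: "U * V = 1\<^sub>m n" by (rule mat_mult_left_right_inverse[OF V U])
  have "(U * V) $$ (a,b) = (\<Sum>i<n. u i $ a * cnj (u i $ b))"
    using assms unfolding U_def V_def by (simp add: scalar_prod_def lessThan_atLeast0)
  then show ?thesis using UV assms by simp
qed

lemma ON_expand:
  assumes "ON n n u" "v \<in> carrier_vec n" "a < n"
  shows "v $ a = (\<Sum>i<n. ipn n (u i) v * u i $ a)"
proof -
  have "(\<Sum>i<n. ipn n (u i) v * u i $ a) = (\<Sum>i<n. \<Sum>b<n. v $ b * (u i $ a * cnj (u i $ b)))"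
    unfolding ipn_def sum_distrib_right by (intro sum.cong refl) (simp add: algebra_simps)
  also have "\<dots> = (\<Sum>b<n. v $ b * (\<Sum>i<n. u i $ a * cnj (u i $ b)))"
    by (subst sum.swap) (simp add: sum_distrib_left)
  also have "\<dots> = (\<Sum>b<n. v $ b * (if a = b then 1 else 0))"
    using ON_complete[OF assms(1) assms(3)] by simp
  also have "\<dots> = v $ a" using assms(3) by (simp add: if_distrib cong: if_cong)
  finally show ?thesis by simp
qed

lemma ON_ext:
  assumes "ON n n u" "v \<in> carrier_vec n" "w \<in> carrier_vec n"
    "\<And>i. i < n \<Longrightarrow> ipn n (u i) v = ipn n (u i) w"
  shows "v = w"
proof (rule eq_vecI)
  fix a assume "a < dim_vec w"
  then have a: "a < n" using assms by simp
  show "v $ a = w $ a" using ON_expand[OF assms(1) assms(2) a] ON_expand[OF assms(1) assms(3) a] assms(4)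
    by simp
qed (use assms in simp)


lemma exists_orth:
  assumes "k < n" "\<And>i. i < k \<Longrightarrow> u i \<in> carrier_vec n"
  shows "\<exists>v \<in> carrier_vec n. v \<noteq> 0\<^sub>v n \<and> (\<forall>i<k. ipn n (u i) v = 0)"
proof -
  define c where "c = (\<lambda>i. vec n (\<lambda>j. if i < k then cnj (u i $ j) else 0))"
  define M where "M = mat\<^sub>r n n (\<lambda>i. if i = n - 1 then 0\<^sub>v n else c i)"
  have M: "M \<in> carrier_mat n n" unfolding M_def by auto
  have "det M = 0" unfolding M_def
    by (rule det_row_0) (use assms(1) in \<open>auto simp: c_def\<close>)
  then obtain v where v: "v \<in> carrier_vec n" "v \<noteq> 0\<^sub>v n" "M *\<^sub>v v = 0\<^sub>v n"
    using det_0_iff_vec_prod_zero[OF M] by blast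
  have "ipn n (u i) v = 0" if i: "i < k" for i
  proof -
    have "(M *\<^sub>v v) $ i = 0" using v(3) i assms(1) by simp
    moreover have "(M *\<^sub>v v) $ i = c i \<bullet> v" using i assms(1) unfolding M_def
      by (subst index_mult_mat_vec) (auto simp: c_def)
    moreover have "c i \<bullet> v = ipn n (u i) v"
      using i v(1) unfolding c_def ipn_def by (simp add: scalar_prod_def lessThan_atLeast0)
    ultimately show ?thesis by simp
  qed
  then show ?thesis using v by blast
qed

definition nrm :: "nat \<Rightarrow> complex vec \<Rightarrow> complex vec" where
  "nrm n v = complex_of_real (1 / sqrt (Re (ipn n v v))) \<cdot>\<^sub>v v"

lemma nrm:
  assumes "v \<in> carrier_vec n" "v \<noteq> 0\<^sub>v n"
  shows "nrm n v \<in> carrier_vec n" "ipn n (nrm n v) (nrm n v) = 1"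
proof -
  show "nrm n v \<in> carrier_vec n" using assms unfolding nrm_def by simp
  define r where "r = Re (ipn n v v)"
  have r: "ipn n v v = of_real r" using ipn_self_nonneg[of n v] unfolding r_def
    by (simp add: complex_eq_iff)
  have "r \<noteq> 0" using ipn_self_zero[OF assms(1)] assms(2) r by auto
  then have rpos: "r > 0" using ipn_self_nonneg[of n v] unfolding r_def by linarith
  have "ipn n (nrm n v) (nrm n v) = of_real (1 / sqrt r) * of_real (1 / sqrt r) * ipn n v v"
    using assms unfolding nrm_def r_def[symmetric] by (simp add: ipn_smult_left ipn_smult_right)
  also have "\<dots> = of_real ((1 / sqrt r) * (1 / sqrt r) * r)" using r by (simp only: of_real_mult)
  also have "sqrt r * sqrt r = r" using rpos by simp
  then have "(1 / sqrt r) * (1 / sqrt r) * r = 1" using rpos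
    by (simp add: field_simps)
  finally show "ipn n (nrm n v) (nrm n v) = 1" by simp
qed

lemma ON_upd:
  assumes "ON n k u" "w \<in> carrier_vec n" "ipn n w w = 1" "\<And>i. i < k \<Longrightarrow> ipn n (u i) w = 0"
  shows "ON n (Suc k) (u(k := w))"
  unfolding ON_def
proof (intro conjI allI impI)
  fix i assume "i < Suc k" then show "(u(k := w)) i \<in> carrier_vec n"
    using assms(1,2) unfolding ON_def by (auto simp: less_Suc_eq)
next
  fix i j assume ij: "i < Suc k" "j < Suc k"
  have o: "ipn n w (u i) = 0" if "i < k" for i using assms(4)[OF that] ipn_cnj[of n w "u i"] by simp
  show "ipn n ((u(k := w)) i) ((u(k := w)) j) = (if i = j then 1 else 0)"
    using ij assms(1,3,4) o unfolding ON_def by (auto simp: less_Suc_eq)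
qed

lemma ON_extend_aux:
  "\<forall>k u. n - k = m \<longrightarrow> k \<le> n \<longrightarrow> ON n k u \<longrightarrow> (\<exists>u'. ON n n u' \<and> (\<forall>i<k. u' i = u i))"
proof (induction m)
  case 0
  then show ?case by auto
next
  case (Suc m)
  show ?case
  proof (intro allI impI)
    fix k u assume m: "n - k = Suc m" and kn: "k \<le> n" and on: "ON n k u"
    then have k: "k < n" by simp
    obtain v where v: "v \<in> carrier_vec n" "v \<noteq> 0\<^sub>v n" "\<forall>i<k. ipn n (u i) v = 0"
      using exists_orth[OF k, of u] on unfolding ON_def by blast
    define w where "w = nrm n v"
    have w: "w \<in> carrier_vec n" "ipn n w w = 1" using nrm[OF v(1,2)] unfolding w_def by auto
    have wo: "ipn n (u i) w = 0" if "i < k" for i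
      using v(3) that v(1) unfolding w_def nrm_def by (simp add: ipn_smult_right)
    have on2: "ON n (Suc k) (u(k := w))" by (rule ON_upd[OF on w wo])
    have m2: "n - Suc k = m" using m by simp
    from Suc.IH[rule_format, OF m2 _ on2] k
    obtain u' where "ON n n u'" "\<forall>i<Suc k. u' i = (u(k := w)) i" by auto
    then show "\<exists>u'. ON n n u' \<and> (\<forall>i<k. u' i = u i)" by auto
  qed
qed

lemma ON_extend:
  assumes "ON n k u" "k \<le> n"
  shows "\<exists>u'. ON n n u' \<and> (\<forall>i<k. u' i = u i)"
  using ON_extend_aux assms by blast


lemma ON_carrier: "ON n k u \<Longrightarrow> i < k \<Longrightarrow> u i \<in> carrier_vec n"
  unfolding ON_def by auto

lemma ON_ip: "ON n k u \<Longrightarrow> i < k \<Longrightarrow> j < k \<Longrightarrow> ipn n (u i) (u j) = (if i = j then 1 else 0)"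
  unfolding ON_def by auto

lemma mult_vec_lincomb:
  fixes A :: "complex mat"
  assumes A: "A \<in> carrier_mat n n" and y: "\<And>j. j \<in> J \<Longrightarrow> y j \<in> carrier_vec n" and J: "finite J"
  shows "A *\<^sub>v vec n (\<lambda>a. \<Sum>j\<in>J. f j * y j $ a) = vec n (\<lambda>a. \<Sum>j\<in>J. f j * (A *\<^sub>v y j) $ a)"
proof (rule eq_vecI)
  fix a assume "a < dim_vec (vec n (\<lambda>a. \<Sum>j\<in>J. f j * (A *\<^sub>v y j) $ a))"
  then have a: "a < n" by simp
  have "(A *\<^sub>v vec n (\<lambda>a. \<Sum>j\<in>J. f j * y j $ a)) $ a = (\<Sum>b<n. A $$ (a,b) * (\<Sum>j\<in>J. f j * y j $ b))"
    by (subst mult_vec_idx[OF A _ a]) auto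
  also have "\<dots> = (\<Sum>b<n. \<Sum>j\<in>J. f j * (A $$ (a,b) * y j $ b))"
    by (simp add: sum_distrib_left) (intro sum.cong refl, simp add: algebra_simps)
  also have "\<dots> = (\<Sum>j\<in>J. \<Sum>b<n. f j * (A $$ (a,b) * y j $ b))"
    by (rule sum.swap)
  also have "\<dots> = (\<Sum>j\<in>J. f j * (\<Sum>b<n. A $$ (a,b) * y j $ b))"
    by (simp add: sum_distrib_left)
  also have "\<dots> = (\<Sum>j\<in>J. f j * (A *\<^sub>v y j) $ a)"
    using mult_vec_idx[OF A y a] by simp
  finally show "(A *\<^sub>v vec n (\<lambda>a. \<Sum>j\<in>J. f j * y j $ a)) $ a = vec n (\<lambda>a. \<Sum>j\<in>J. f j * (A *\<^sub>v y j) $ a) $ a"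
    using a by simp
qed (use A in auto)

lemma eig_step:
  assumes H: "herm n A" and on: "ON n n u" and k: "k < n"
    and ev: "\<And>i. i < k \<Longrightarrow> A *\<^sub>v u i = lam i \<cdot>\<^sub>v u i"
  shows "\<exists>w \<mu>. w \<in> carrier_vec n \<and> ipn n w w = 1 \<and> (\<forall>i<k. ipn n (u i) w = 0) \<and> A *\<^sub>v w = \<mu> \<cdot>\<^sub>v w"
proof -
  have A: "A \<in> carrier_mat n n" using H by (rule herm_carrier)
  define m where "m = n - k"
  have m: "m > 0" using k unfolding m_def by simp
  define C where "C = mat m m (\<lambda>(i,j). ipn n (u (i + k)) (A *\<^sub>v u (j + k)))"
  have C: "C \<in> carrier_mat m m" unfolding C_def by simp
  obtain \<mu> where "\<mu> \<in> spectrum C" using spectrum_non_empty[OF C m] by blast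
  then obtain c where c: "c \<in> carrier_vec m" "c \<noteq> 0\<^sub>v m" "C *\<^sub>v c = \<mu> \<cdot>\<^sub>v c"
    unfolding spectrum_def eigenvalue_def eigenvector_def using C by auto
  define v where "v = vec n (\<lambda>a. \<Sum>j<m. c $ j * u (j + k) $ a)"
  have v: "v \<in> carrier_vec n" unfolding v_def by simp
  have uc: "\<And>j. j \<in> {..<m} \<Longrightarrow> u (j + k) \<in> carrier_vec n" using on unfolding m_def
    by (intro ON_carrier) auto
  have coef: "ipn n (u i) v = (if i < k then 0 else c $ (i - k))" if i: "i < n" for i
  proof -
    have "ipn n (u i) v = (\<Sum>j<m. c $ j * ipn n (u i) (u (j + k)))"
      unfolding v_def by (rule ipn_lincomb) simp
    also have "\<dots> = (\<Sum>j<m. c $ j * (if i = j + k then 1 else 0))"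
      using i on unfolding m_def by (intro sum.cong refl) (simp add: ON_ip)
    also have "\<dots> = (if i < k then 0 else c $ (i - k))"
    proof (cases "i < k")
      case True then show ?thesis by (intro trans[OF sum.neutral]) auto
    next
      case False
      then have "(\<Sum>j<m. c $ j * (if i = j + k then 1 else 0)) = (\<Sum>j<m. if j = i - k then c $ j else 0)"
        by (intro sum.cong refl) auto
      also have "\<dots> = c $ (i - k)" using False i unfolding m_def by simp
      finally show ?thesis using False by simp
    qed
    finally show ?thesis .
  qed
  have Av: "A *\<^sub>v v = vec n (\<lambda>a. \<Sum>j<m. c $ j * (A *\<^sub>v u (j + k)) $ a)"
    unfolding v_def by (rule mult_vec_lincomb[OF A uc]) simp_all
  have coefA: "ipn n (u i) (A *\<^sub>v v) = ipn n (u i) (\<mu> \<cdot>\<^sub>v v)" if i: "i < n" for i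
  proof (cases "i < k")
    case True
    have ui: "u i \<in> carrier_vec n" using on i by (intro ON_carrier)
    have "ipn n (u i) (A *\<^sub>v v) = ipn n (A *\<^sub>v u i) v" using herm_ip[OF H ui v] by simp
    also have "\<dots> = cnj (lam i) * ipn n (u i) v" using ev[OF True] ui by (simp add: ipn_smult_left)
    also have "\<dots> = 0" using coef[OF i] True by simp
    finally show ?thesis using coef[OF i] True v by (simp add: ipn_smult_right)
  next
    case False
    then have ik: "i - k < m" using i unfolding m_def by simp
    have "ipn n (u i) (A *\<^sub>v v) = (\<Sum>j<m. c $ j * ipn n (u i) (A *\<^sub>v u (j + k)))"
      unfolding Av by (rule ipn_lincomb) simp
    also have "\<dots> = (\<Sum>j<m. C $$ (i - k, j) * c $ j)"
      using False ik unfolding C_def by (intro sum.cong refl) (simp add: mult.commute)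
    also have "\<dots> = (C *\<^sub>v c) $ (i - k)" using mult_vec_idx[OF C c(1) ik] by simp
    also have "\<dots> = \<mu> * c $ (i - k)" using c(1,3) ik by simp
    also have "\<dots> = ipn n (u i) (\<mu> \<cdot>\<^sub>v v)" using coef[OF i] False v by (simp add: ipn_smult_right)
    finally show ?thesis .
  qed
  have Aeq: "A *\<^sub>v v = \<mu> \<cdot>\<^sub>v v"
    by (rule ON_ext[OF on _ _ coefA]) (use A v in auto)
  have vnz: "v \<noteq> 0\<^sub>v n"
  proof
    assume v0: "v = 0\<^sub>v n"
    have "\<exists>p<m. c $ p \<noteq> 0"
    proof (rule ccontr)
      assume "\<not> (\<exists>p<m. c $ p \<noteq> 0)"
      then have "c = 0\<^sub>v m" using c(1) by (intro eq_vecI) auto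
      then show False using c(2) by simp
    qed
    then obtain p where p: "p < m" "c $ p \<noteq> 0" by blast
    have "ipn n (u (p + k)) v = c $ p" using coef[of "p + k"] p unfolding m_def by simp
    then show False using v0 p by simp
  qed
  define w where "w = nrm n v"
  have w: "w \<in> carrier_vec n" "ipn n w w = 1" using nrm[OF v vnz] unfolding w_def by auto
  have wo: "\<forall>i<k. ipn n (u i) w = 0"
    using coef k v unfolding w_def nrm_def by (simp add: ipn_smult_right)
  have "A *\<^sub>v w = \<mu> \<cdot>\<^sub>v w" unfolding w_def nrm_def
    using Aeq A v by (simp add: mult_mat_vec smult_smult_assoc mult.commute)
  then show ?thesis using w wo by blast
qed

lemma spectral_aux:
  assumes H: "herm n A"
  shows "k \<le> n \<Longrightarrow> \<exists>u lam. ON n n u \<and> (\<forall>i<k. A *\<^sub>v u i = lam i \<cdot>\<^sub>v u i)"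
proof (induction k)
  case 0
  have "ON n 0 u" for u unfolding ON_def by simp
  then show ?case using ON_extend[of n 0] by blast
next
  case (Suc k)
  then obtain u lam where on: "ON n n u" and ev: "\<forall>i<k. A *\<^sub>v u i = lam i \<cdot>\<^sub>v u i" by auto
  have k: "k < n" using Suc by simp
  obtain w \<mu> where w: "w \<in> carrier_vec n" "ipn n w w = 1" "\<forall>i<k. ipn n (u i) w = 0" "A *\<^sub>v w = \<mu> \<cdot>\<^sub>v w"
    using eig_step[OF H on k, of lam] ev by blast
  have onk: "ON n k u" using on k unfolding ON_def by auto
  have on2: "ON n (Suc k) (u(k := w))" by (rule ON_upd[OF onk w(1,2)]) (use w(3) in auto)
  obtain u' where u': "ON n n u'" "\<forall>i<Suc k. u' i = (u(k := w)) i"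
    using ON_extend[OF on2] Suc by blast
  have "\<forall>i<Suc k. A *\<^sub>v u' i = (lam(k := \<mu>)) i \<cdot>\<^sub>v u' i"
    using u'(2) ev w(4) by (auto simp: less_Suc_eq)
  then show ?case using u'(1) by blast
qed

lemma spectral:
  assumes "herm n A"
  shows "\<exists>u lam. ON n n u \<and> (\<forall>i<n. A *\<^sub>v u i = lam i \<cdot>\<^sub>v u i)"
  using spectral_aux[OF assms] by blast


lemma vec_expand:
  assumes "ON n n u" "v \<in> carrier_vec n"
  shows "v = vec n (\<lambda>a. \<Sum>i<n. ipn n (u i) v * u i $ a)"
  using ON_expand[OF assms] assms(2) by (intro eq_vecI) auto

lemma mat_ext_ON:
  fixes M N :: "complex mat"
  assumes M: "M \<in> carrier_mat n n" and N: "N \<in> carrier_mat n n" and on: "ON n n u"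
    and eq: "\<And>i. i < n \<Longrightarrow> M *\<^sub>v u i = N *\<^sub>v u i"
  shows "M = N"
proof -
  have uc: "\<And>i. i \<in> {..<n} \<Longrightarrow> u i \<in> carrier_vec n" using on by (auto intro: ON_carrier)
  have vv: "M *\<^sub>v v = N *\<^sub>v v" if v: "v \<in> carrier_vec n" for v
  proof -
    have "M *\<^sub>v v = vec n (\<lambda>a. \<Sum>i<n. ipn n (u i) v * (M *\<^sub>v u i) $ a)"
      by (subst vec_expand[OF on v], rule mult_vec_lincomb[OF M uc]) simp_all
    also have "\<dots> = vec n (\<lambda>a. \<Sum>i<n. ipn n (u i) v * (N *\<^sub>v u i) $ a)"
      using eq by simp
    also have "\<dots> = N *\<^sub>v v"
      by (subst (2) vec_expand[OF on v], rule mult_vec_lincomb[OF N uc, symmetric]) simp_all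
    finally show ?thesis .
  qed
  have ent: "X $$ (a,b) = (X *\<^sub>v unit_vec n b) $ a" if X: "X \<in> carrier_mat n n" and ab: "a < n" "b < n"
    for X :: "complex mat" and a b
  proof -
    have "(X *\<^sub>v unit_vec n b) $ a = (\<Sum>j<n. X $$ (a,j) * unit_vec n b $ j)"
      by (rule mult_vec_idx[OF X _ ab(1)]) simp
    also have "\<dots> = (\<Sum>j<n. if j = b then X $$ (a,j) else 0)"
      by (intro sum.cong refl) (auto simp: unit_vec_def)
    also have "\<dots> = X $$ (a,b)" using ab by simp
    finally show ?thesis by simp
  qed
  show ?thesis
  proof (rule eq_matI)
    fix a b assume "a < dim_row N" "b < dim_col N"
    then have ab: "a < n" "b < n" using N by auto
    show "M $$ (a,b) = N $$ (a,b)" using ent[OF M ab] ent[OF N ab] vv[of "unit_vec n b"] by simp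
  qed (use M N in auto)
qed

lemma parseval:
  assumes on: "ON n n u" and v: "v \<in> carrier_vec n"
  shows "ipn n v w = (\<Sum>i<n. cnj (ipn n (u i) v) * ipn n (u i) w)"
proof -
  have "ipn n v w = (\<Sum>a<n. cnj (\<Sum>i<n. ipn n (u i) v * u i $ a) * w $ a)"
    unfolding ipn_def[of n v w]
  proof (intro sum.cong refl)
    fix a assume "a \<in> {..<n}"
    then have "v $ a = (\<Sum>i<n. ipn n (u i) v * u i $ a)" using ON_expand[OF on v] by simp
    then show "cnj (v $ a) * w $ a = cnj (\<Sum>i<n. ipn n (u i) v * u i $ a) * w $ a" by simp
  qed
  also have "\<dots> = (\<Sum>a<n. \<Sum>i<n. cnj (ipn n (u i) v) * (cnj (u i $ a) * w $ a))"
    by (simp add: sum_distrib_right mult.assoc)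
  also have "\<dots> = (\<Sum>i<n. \<Sum>a<n. cnj (ipn n (u i) v) * (cnj (u i $ a) * w $ a))"
    by (rule sum.swap)
  also have "\<dots> = (\<Sum>i<n. cnj (ipn n (u i) v) * ipn n (u i) w)"
    unfolding ipn_def by (simp add: sum_distrib_left)
  finally show ?thesis .
qed

lemma herm_real: assumes "herm n A" "v \<in> carrier_vec n" shows "Im (ipn n v (A *\<^sub>v v)) = 0"
proof -
  have "ipn n v (A *\<^sub>v v) = cnj (ipn n v (A *\<^sub>v v))"
    using herm_ip[OF assms(1,2,2)] ipn_cnj[of n v "A *\<^sub>v v"] by simp
  then have "Im (ipn n v (A *\<^sub>v v)) = Im (cnj (ipn n v (A *\<^sub>v v)))" by simp
  then show ?thesis by simp
qed

lemma eigval_eq: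
  assumes "ON n n u" "i < n" "A *\<^sub>v u i = lam \<cdot>\<^sub>v u i"
  shows "lam = ipn n (u i) (A *\<^sub>v u i)"
  using assms ON_ip[OF assms(1,2,2)] ON_carrier[OF assms(1,2)] by (simp add: ipn_smult_right)

lemma quad_form:
  assumes H: "herm n X" and on: "ON n n u" and ev: "\<And>i. i < n \<Longrightarrow> X *\<^sub>v u i = of_real (l i) \<cdot>\<^sub>v u i"
    and v: "v \<in> carrier_vec n"
  shows "ipn n v (X *\<^sub>v v) = of_real (\<Sum>i<n. l i * (cmod (ipn n (u i) v))\<^sup>2)"
proof -
  have "ipn n v (X *\<^sub>v v) = (\<Sum>i<n. cnj (ipn n (u i) v) * ipn n (u i) (X *\<^sub>v v))"
    by (rule parseval[OF on v])
  also have "\<dots> = (\<Sum>i<n. of_real (l i * (cmod (ipn n (u i) v))\<^sup>2))"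
  proof (intro sum.cong refl)
    fix i assume "i \<in> {..<n}"
    then have i: "i < n" by simp
    have ui: "u i \<in> carrier_vec n" using on i by (rule ON_carrier)
    have "ipn n (u i) (X *\<^sub>v v) = ipn n (X *\<^sub>v u i) v" using herm_ip[OF H ui v] by simp
    also have "\<dots> = of_real (l i) * ipn n (u i) v" using ev[OF i] ui by (simp add: ipn_smult_left)
    finally have "ipn n (u i) (X *\<^sub>v v) = of_real (l i) * ipn n (u i) v" .
    then have "cnj (ipn n (u i) v) * ipn n (u i) (X *\<^sub>v v) = of_real (l i) * (ipn n (u i) v * cnj (ipn n (u i) v))"
      by (simp add: algebra_simps)
    also have "ipn n (u i) v * cnj (ipn n (u i) v) = of_real ((cmod (ipn n (u i) v))\<^sup>2)"
      by (rule complex_norm_square[symmetric])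
    finally show "cnj (ipn n (u i) v) * ipn n (u i) (X *\<^sub>v v) = of_real (l i * (cmod (ipn n (u i) v))\<^sup>2)"
      by simp
  qed
  also have "\<dots> = of_real (\<Sum>i<n. l i * (cmod (ipn n (u i) v))\<^sup>2)" by simp
  finally show ?thesis .
qed

lemma spectral_real:
  assumes H: "herm n A"
  shows "\<exists>u l. ON n n u \<and> (\<forall>i<n. A *\<^sub>v u i = of_real (l i) \<cdot>\<^sub>v u i)"
proof -
  obtain u lam where on: "ON n n u" and ev: "\<forall>i<n. A *\<^sub>v u i = lam i \<cdot>\<^sub>v u i"
    using spectral[OF H] by blast
  have real_lam: "lam i = of_real (Re (lam i))" if i: "i < n" for i
  proof -
    have e: "lam i = ipn n (u i) (A *\<^sub>v u i)" by (rule eigval_eq[OF on i]) (use ev i in auto)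
    have "Im (lam i) = 0" by (subst e) (rule herm_real[OF H ON_carrier[OF on i]])
    then show ?thesis by (simp add: complex_eq_iff)
  qed
  have "\<forall>i<n. A *\<^sub>v u i = of_real (Re (lam i)) \<cdot>\<^sub>v u i"
  proof (intro allI impI)
    fix i assume i: "i < n"
    have e: "A *\<^sub>v u i = lam i \<cdot>\<^sub>v u i" using ev i by simp
    show "A *\<^sub>v u i = of_real (Re (lam i)) \<cdot>\<^sub>v u i" by (subst real_lam[OF i, symmetric]) (rule e)
  qed
  then show ?thesis using on
    by (intro exI[of _ u] exI[of _ "\<lambda>i. Re (lam i)"] conjI) auto
qed


lemma braket_ipn: "v \<in> carrier_vec n \<Longrightarrow> braket v M = ipn n v (M *\<^sub>v v)"
  unfolding braket_def ipn_def by simp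

lemma ipn_self_eq0:
  assumes "v \<in> carrier_vec n" "Re (ipn n v v) \<le> 0" shows "v = 0\<^sub>v n"
proof -
  have "ipn n v v = 0" using assms(2) ipn_self_nonneg[of n v] by (simp add: complex_eq_iff)
  then show ?thesis using ipn_self_zero[OF assms(1)] by simp
qed

lemma psd_herm:
  assumes "psd T" "dim_row T = n"
  shows "herm n T" "\<And>v. v \<in> carrier_vec n \<Longrightarrow> Re (ipn n v (T *\<^sub>v v)) \<ge> 0"
proof -
  have T: "T \<in> carrier_mat n n" using assms unfolding psd_def by auto
  show "herm n T" using adjoint_herm[OF T] assms unfolding psd_def by auto
  fix v :: "complex vec" assume v: "v \<in> carrier_vec n"
  then have "v \<in> carrier_vec (dim_row T)" using assms(2) by simp
  then have "Re (braket v T) \<ge> 0" using assms(1) unfolding psd_def by blast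
  then show "Re (ipn n v (T *\<^sub>v v)) \<ge> 0" using braket_ipn[OF v] by simp
qed

lemma sqrt_ex1:
  assumes H: "herm n A" and pos: "\<And>v. v \<in> carrier_vec n \<Longrightarrow> Re (ipn n v (A *\<^sub>v v)) \<ge> 0"
  shows "\<exists>!S. psd S \<and> dim_row S = dim_row A \<and> S * S = A"
proof -
  have A: "A \<in> carrier_mat n n" using H by (rule herm_carrier)
  obtain u l where on: "ON n n u" and ev: "\<forall>i<n. A *\<^sub>v u i = of_real (l i) \<cdot>\<^sub>v u i"
    using spectral_real[OF H] by blast
  have uc: "\<And>i. i < n \<Longrightarrow> u i \<in> carrier_vec n" using on by (rule ON_carrier)
  have lpos: "l i \<ge> 0" if i: "i < n" for i
  proof -
    have "complex_of_real (l i) = ipn n (u i) (A *\<^sub>v u i)" by (rule eigval_eq[OF on i]) (use ev i in auto)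
    then have e: "l i = Re (ipn n (u i) (A *\<^sub>v u i))" by (metis Re_complex_of_real)
    have "Re (ipn n (u i) (A *\<^sub>v u i)) \<ge> 0" by (rule pos[OF uc[OF i]])
    then show ?thesis unfolding e .
  qed
  define r where "r = (\<lambda>i. sqrt (max 0 (l i)))"
  have rpos: "r i \<ge> 0" for i unfolding r_def by simp
  have rsq: "r i * r i = l i" if "i < n" for i unfolding r_def using lpos[OF that] by (simp add: max_def)
  define S where "S = mat n n (\<lambda>(a,b). \<Sum>i<n. of_real (r i) * (u i $ a * cnj (u i $ b)))"
  have S: "S \<in> carrier_mat n n" unfolding S_def by simp
  have HS: "herm n S" unfolding herm_def
  proof (intro conjI allI impI S)
    fix a b assume "a < n" "b < n"
    then show "S $$ (a, b) = cnj (S $$ (b, a))" unfolding S_def by (simp add: mult.commute)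
  qed
  have Su: "S *\<^sub>v u j = of_real (r j) \<cdot>\<^sub>v u j" if j: "j < n" for j
  proof (rule eq_vecI)
    fix a assume "a < dim_vec (of_real (r j) \<cdot>\<^sub>v u j)"
    then have a: "a < n" using uc[OF j] by simp
    have "(S *\<^sub>v u j) $ a = (\<Sum>b<n. S $$ (a,b) * u j $ b)" by (rule mult_vec_idx[OF S uc[OF j] a])
    also have "\<dots> = (\<Sum>b<n. \<Sum>i<n. of_real (r i) * u i $ a * (cnj (u i $ b) * u j $ b))"
      using a unfolding S_def by (simp add: sum_distrib_right mult.assoc)
    also have "\<dots> = (\<Sum>i<n. \<Sum>b<n. of_real (r i) * u i $ a * (cnj (u i $ b) * u j $ b))"
      by (rule sum.swap)
    also have "\<dots> = (\<Sum>i<n. of_real (r i) * u i $ a * ipn n (u i) (u j))"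
      unfolding ipn_def by (simp add: sum_distrib_left)
    also have "\<dots> = (\<Sum>i<n. if i = j then of_real (r i) * u i $ a else 0)"
      using ON_ip[OF on _ j] by (intro sum.cong refl) auto
    also have "\<dots> = (of_real (r j) \<cdot>\<^sub>v u j) $ a" using j a uc[OF j] by simp
    finally show "(S *\<^sub>v u j) $ a = (of_real (r j) \<cdot>\<^sub>v u j) $ a" .
  qed (use S uc[OF j] in auto)
  have Spos: "ipn n v (S *\<^sub>v v) = of_real (\<Sum>i<n. r i * (cmod (ipn n (u i) v))\<^sup>2)"
    if "v \<in> carrier_vec n" for v
    by (rule quad_form[OF HS on Su that])
  have psdS: "psd S" unfolding psd_def
  proof (intro conjI ballI)
    show "S \<in> carrier_mat (dim_row S) (dim_row S)" using S by simp
    show "mat_adjoint S = S" using adjoint_herm[OF S] HS by simp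
  next
    fix v :: "complex vec" assume "v \<in> carrier_vec (dim_row S)"
    then have v: "v \<in> carrier_vec n" using S by simp
    show "0 \<le> Re (braket v S)" using Spos[OF v] braket_ipn[OF v] rpos by (simp add: sum_nonneg)
    show "Im (braket v S) = 0" using Spos[OF v] braket_ipn[OF v] by simp
  qed
  have SS: "S * S = A"
  proof (rule mat_ext_ON[OF _ A on])
    show "S * S \<in> carrier_mat n n" using S by simp
    fix j assume j: "j < n"
    have "(S * S) *\<^sub>v u j = S *\<^sub>v (S *\<^sub>v u j)" using S uc[OF j] by simp
    also have "\<dots> = of_real (r j) \<cdot>\<^sub>v (of_real (r j) \<cdot>\<^sub>v u j)"
      using Su[OF j] mult_mat_vec[OF S uc[OF j]] by simp
    also have "\<dots> = of_real (l j) \<cdot>\<^sub>v u j" using rsq[OF j] by (simp add: smult_smult_assoc)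
      (metis of_real_mult)
    also have "\<dots> = A *\<^sub>v u j" using ev j by simp
    finally show "(S * S) *\<^sub>v u j = A *\<^sub>v u j" .
  qed
  have uniq: "T = S" if T: "psd T" "dim_row T = dim_row A" "T * T = A" for T
  proof -
    have Tn: "dim_row T = n" using T(2) A by simp
    have HT: "herm n T" and Tpos: "\<And>v. v \<in> carrier_vec n \<Longrightarrow> Re (ipn n v (T *\<^sub>v v)) \<ge> 0"
      using psd_herm[OF T(1) Tn] by auto
    have Tc: "T \<in> carrier_mat n n" using HT by (rule herm_carrier)
    show "T = S"
    proof (rule mat_ext_ON[OF Tc S on])
      fix j assume j: "j < n"
      define v where "v = u j"
      have v: "v \<in> carrier_vec n" unfolding v_def using uc[OF j] .
      define \<mu> where "\<mu> = (of_real (r j) :: complex)"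
      have TTv: "T *\<^sub>v (T *\<^sub>v v) = of_real (l j) \<cdot>\<^sub>v v"
        using assoc_mult_mat_vec[OF Tc Tc v] T(3) ev j unfolding v_def by simp
      define w where "w = T *\<^sub>v v - \<mu> \<cdot>\<^sub>v v"
      have w: "w \<in> carrier_vec n" unfolding w_def using Tc v by simp
      have Tw: "T *\<^sub>v w = of_real (l j) \<cdot>\<^sub>v v - \<mu> \<cdot>\<^sub>v (T *\<^sub>v v)"
        unfolding w_def using Tc v TTv by (simp add: mult_minus_distrib_mat_vec mult_mat_vec)
      have lmu: "of_real (l j) = \<mu> * \<mu>" unfolding \<mu>_def using rsq[OF j] by (metis of_real_mult)
      have Tw2: "T *\<^sub>v w = (- \<mu>) \<cdot>\<^sub>v w"
      proof (rule eq_vecI)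
        fix a assume "a < dim_vec ((- \<mu>) \<cdot>\<^sub>v w)"
        then have a: "a < n" using w by simp
        have e1: "(T *\<^sub>v w) $ a = of_real (l j) * v $ a - \<mu> * (T *\<^sub>v v) $ a"
          unfolding Tw using a v Tc by simp
        have e2: "((- \<mu>) \<cdot>\<^sub>v w) $ a = - \<mu> * ((T *\<^sub>v v) $ a - \<mu> * v $ a)"
          unfolding w_def using a v Tc by simp
        have e3: "of_real (l j) * v $ a - \<mu> * (T *\<^sub>v v) $ a = - \<mu> * ((T *\<^sub>v v) $ a - \<mu> * v $ a)"
          unfolding lmu by (simp add: algebra_simps)
        show "(T *\<^sub>v w) $ a = ((- \<mu>) \<cdot>\<^sub>v w) $ a"
          by (rule trans[OF e1 trans[OF e3 e2[symmetric]]])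
      qed (use w Tc in simp)
      have "w = 0\<^sub>v n"
      proof (cases "r j = 0")
        case True
        then have w': "w = T *\<^sub>v v" unfolding w_def \<mu>_def using Tc v by auto
        have "ipn n w w = ipn n v (T *\<^sub>v w)" unfolding w' using herm_ip[OF HT v] Tc v by simp
        also have "\<dots> = 0" using Tw2 True w unfolding \<mu>_def by (simp add: ipn_smult_right)
        finally show ?thesis using ipn_self_zero[OF w] by simp
      next
        case False
        then have rp: "r j > 0" using rpos[of j] by simp
        have "ipn n w (T *\<^sub>v w) = - \<mu> * ipn n w w" using Tw2 w by (simp add: ipn_smult_right)
        then have "Re (ipn n w (T *\<^sub>v w)) = - r j * Re (ipn n w w)" unfolding \<mu>_def by simp
        then have "r j * Re (ipn n w w) \<le> 0" using Tpos[OF w] by simp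
        then have "Re (ipn n w w) \<le> 0" using rp by (simp add: mult_le_0_iff)
        then show ?thesis using ipn_self_eq0[OF w] by simp
      qed
      then have "T *\<^sub>v v = \<mu> \<cdot>\<^sub>v v"
      proof -
        assume w0: "w = 0\<^sub>v n"
        show ?thesis
        proof (rule eq_vecI)
          fix a assume "a < dim_vec (\<mu> \<cdot>\<^sub>v v)"
          then have a: "a < n" using v by simp
          have "w $ a = 0" using w0 a by simp
          moreover have "w $ a = (T *\<^sub>v v) $ a - \<mu> * v $ a" unfolding w_def using a v Tc by simp
          ultimately show "(T *\<^sub>v v) $ a = (\<mu> \<cdot>\<^sub>v v) $ a" using a v by simp
        qed (use v Tc in simp)
      qed
      then show "T *\<^sub>v u j = S *\<^sub>v u j" using Su[OF j] unfolding v_def \<mu>_def by simp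
    qed
  qed
  show ?thesis
  proof (rule ex1I[of _ S])
    show "psd S \<and> dim_row S = dim_row A \<and> S * S = A" using psdS S SS A by simp
  next
    fix T assume "psd T \<and> dim_row T = dim_row A \<and> T * T = A"
    then show "T = S" using uniq by blast
  qed
qed


lemma mat_mult_idx:
  fixes A B :: "complex mat"
  assumes "A \<in> carrier_mat n n" "B \<in> carrier_mat n n" "i < n" "j < n"
  shows "(A * B) $$ (i,j) = (\<Sum>l<n. A $$ (i,l) * B $$ (l,j))"
  using assms by (simp add: scalar_prod_def lessThan_atLeast0)

lemma herm_mult_self: assumes h: "herm n P" shows "herm n (P * P)"
proof -
  have P: "P \<in> carrier_mat n n" using h by (rule herm_carrier)
  show ?thesis unfolding herm_def
  proof (intro conjI allI impI)
    show "P * P \<in> carrier_mat n n" using P by simp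
    fix i j assume ij: "i < n" "j < n"
    show "(P * P) $$ (i,j) = cnj ((P * P) $$ (j,i))"
      unfolding mat_mult_idx[OF P P ij] mat_mult_idx[OF P P ij(2,1)]
      by (simp add: herm_cnj[OF h] ij mult.commute)
  qed
qed

lemma herm_add: assumes h: "herm n A" "herm n B" shows "herm n (A + B)"
proof -
  have A: "A \<in> carrier_mat n n" and B: "B \<in> carrier_mat n n" using h by (auto intro: herm_carrier)
  show ?thesis unfolding herm_def
  proof (intro conjI allI impI)
    show "A + B \<in> carrier_mat n n" using A B by simp
    fix i j assume ij: "i < n" "j < n"
    show "(A + B) $$ (i,j) = cnj ((A + B) $$ (j,i))"
      using A B ij by (simp add: herm_cnj[OF h(1)] herm_cnj[OF h(2)])
  qed
qed

lemma herm_minus: assumes h: "herm n A" "herm n B" shows "herm n (A - B)"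
proof -
  have A: "A \<in> carrier_mat n n" and B: "B \<in> carrier_mat n n" using h by (auto intro: herm_carrier)
  show ?thesis unfolding herm_def
  proof (intro conjI allI impI)
    show "A - B \<in> carrier_mat n n" using B by (rule minus_carrier_mat)
    fix i j assume ij: "i < n" "j < n"
    show "(A - B) $$ (i,j) = cnj ((A - B) $$ (j,i))"
      using A B ij by (simp add: herm_cnj[OF h(1)] herm_cnj[OF h(2)])
  qed
qed

lemma herm_smult: assumes h: "herm n A" shows "herm n (complex_of_real c \<cdot>\<^sub>m A)"
proof -
  have A: "A \<in> carrier_mat n n" using h by (rule herm_carrier)
  show ?thesis unfolding herm_def
  proof (intro conjI allI impI)
    show "complex_of_real c \<cdot>\<^sub>m A \<in> carrier_mat n n" using A by simp
    fix i j assume ij: "i < n" "j < n"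
    show "(complex_of_real c \<cdot>\<^sub>m A) $$ (i,j) = cnj ((complex_of_real c \<cdot>\<^sub>m A) $$ (j,i))"
      using A ij by (simp add: herm_cnj[OF h])
  qed
qed

lemma smult_mat_vec:
  fixes A :: "complex mat"
  assumes A: "A \<in> carrier_mat n n" and v: "v \<in> carrier_vec n"
  shows "(k \<cdot>\<^sub>m A) *\<^sub>v v = k \<cdot>\<^sub>v (A *\<^sub>v v)"
proof (rule eq_vecI)
  fix a assume "a < dim_vec (k \<cdot>\<^sub>v (A *\<^sub>v v))"
  then have a: "a < n" using A by simp
  have kA: "k \<cdot>\<^sub>m A \<in> carrier_mat n n" using A by simp
  show "((k \<cdot>\<^sub>m A) *\<^sub>v v) $ a = (k \<cdot>\<^sub>v (A *\<^sub>v v)) $ a"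
    using mult_vec_idx[OF kA v a] mult_vec_idx[OF A v a] a A
    by (simp add: sum_distrib_left mult.assoc)
qed (use A in simp)

lemma ipn_add_left: "v \<in> carrier_vec n \<Longrightarrow> x \<in> carrier_vec n \<Longrightarrow> ipn n (v + x) w = ipn n v w + ipn n x w"
  unfolding ipn_def by (simp add: distrib_right sum.distrib)

lemma ipn_minus_right: "w \<in> carrier_vec n \<Longrightarrow> x \<in> carrier_vec n \<Longrightarrow> ipn n v (w - x) = ipn n v w - ipn n v x"
  unfolding ipn_def by (simp add: right_diff_distrib sum_subtractf)

lemma cmod_comb:
  assumes "c\<^sup>2 + s\<^sup>2 = (1::real)"
  shows "(cmod (of_real c * p + of_real s * q))\<^sup>2 \<le> (cmod p)\<^sup>2 + (cmod q)\<^sup>2"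
proof -
  have e: "(cmod z)\<^sup>2 = (Re z)\<^sup>2 + (Im z)\<^sup>2" for z by (simp add: cmod_power2)
  have r: "(c * a + s * b)\<^sup>2 \<le> a\<^sup>2 + b\<^sup>2" for a b :: real
  proof -
    have "(c * a + s * b)\<^sup>2 + (c * b - s * a)\<^sup>2 = (c\<^sup>2 + s\<^sup>2) * (a\<^sup>2 + b\<^sup>2)"
      by (simp add: power2_eq_square algebra_simps)
    also have "\<dots> = a\<^sup>2 + b\<^sup>2" using assms by simp
    finally have eq: "(c * a + s * b)\<^sup>2 + (c * b - s * a)\<^sup>2 = a\<^sup>2 + b\<^sup>2" .
    then show ?thesis using zero_le_power2[of "c * b - s * a"] by linarith
  qed
  show ?thesis unfolding e
    using r[of "Re p" "Re q"] r[of "Im p" "Im q"] by simp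
qed

lemma norm_comb:
  assumes "c\<^sup>2 + s\<^sup>2 = (1::real)" "x \<in> carrier_vec n" "y \<in> carrier_vec n"
  shows "Re (ipn n (of_real c \<cdot>\<^sub>v x + of_real s \<cdot>\<^sub>v y) (of_real c \<cdot>\<^sub>v x + of_real s \<cdot>\<^sub>v y))
    \<le> Re (ipn n x x) + Re (ipn n y y)"
proof -
  have "Re (ipn n (of_real c \<cdot>\<^sub>v x + of_real s \<cdot>\<^sub>v y) (of_real c \<cdot>\<^sub>v x + of_real s \<cdot>\<^sub>v y))
     = (\<Sum>i<n. (cmod (of_real c * x $ i + of_real s * y $ i))\<^sup>2)"
    unfolding ipn_self_real using assms(2,3) by simp
  also have "\<dots> \<le> (\<Sum>i<n. (cmod (x $ i))\<^sup>2 + (cmod (y $ i))\<^sup>2)"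
    by (rule sum_mono) (rule cmod_comb[OF assms(1)])
  also have "\<dots> = Re (ipn n x x) + Re (ipn n y y)"
    unfolding ipn_self_real by (simp add: sum.distrib)
  finally show ?thesis .
qed


lemma le_of_sq_le:
  assumes HH: "herm n H" and HS: "herm n S"
    and Spos: "\<And>v. v \<in> carrier_vec n \<Longrightarrow> Re (ipn n v (S *\<^sub>v v)) \<ge> 0"
    and sq: "\<And>v. v \<in> carrier_vec n \<Longrightarrow> Re (ipn n (H *\<^sub>v v) (H *\<^sub>v v)) \<le> Re (ipn n (S *\<^sub>v v) (S *\<^sub>v v))"
    and psi: "psi \<in> carrier_vec n"
  shows "Re (ipn n psi (H *\<^sub>v psi)) \<le> Re (ipn n psi (S *\<^sub>v psi))"
proof -
  have Hc: "H \<in> carrier_mat n n" using HH by (rule herm_carrier)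
  have Sc: "S \<in> carrier_mat n n" using HS by (rule herm_carrier)
  define X where "X = H - S"
  have HX: "herm n X" unfolding X_def by (rule herm_minus[OF HH HS])
  have Xv: "X *\<^sub>v v = H *\<^sub>v v - S *\<^sub>v v" if "v \<in> carrier_vec n" for v
    unfolding X_def using Hc Sc that by (rule minus_mult_distrib_mat_vec)
  obtain u l where on: "ON n n u" and ev: "\<forall>i<n. X *\<^sub>v u i = of_real (l i) \<cdot>\<^sub>v u i"
    using spectral_real[OF HX] by blast
  have lneg: "l i \<le> 0" if i: "i < n" for i
  proof (rule ccontr)
    assume "\<not> l i \<le> 0"
    then have lp: "l i > 0" by simp
    have ui: "u i \<in> carrier_vec n" using on i by (rule ON_carrier)
    define x where "x = S *\<^sub>v u i"
    define y where "y = complex_of_real (l i) \<cdot>\<^sub>v u i"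
    have x: "x \<in> carrier_vec n" and y: "y \<in> carrier_vec n" unfolding x_def y_def using Sc ui by auto
    have Hu: "H *\<^sub>v u i = x + y"
    proof (rule eq_vecI)
      fix a assume "a < dim_vec (x + y)"
      then have a: "a < n" using y by simp
      have "(X *\<^sub>v u i) $ a = (H *\<^sub>v u i) $ a - x $ a" using Xv[OF ui] a Hc Sc ui unfolding x_def by simp
      moreover have "(X *\<^sub>v u i) $ a = y $ a" using ev i unfolding y_def by simp
      ultimately show "(H *\<^sub>v u i) $ a = (x + y) $ a" using a x y by simp
    qed (use Hc x y in simp)
    have uu: "ipn n (u i) (u i) = 1" using ON_ip[OF on i i] by simp
    have "ipn n (x + y) (x + y) = ipn n x x + ipn n x y + (ipn n y x + ipn n y y)"
      using x y by (simp add: ipn_add_left ipn_add_right)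
    also have "ipn n x y = of_real (l i) * ipn n x (u i)" unfolding y_def using ui by (simp add: ipn_smult_right)
    also have "ipn n y x = of_real (l i) * ipn n (u i) x" unfolding y_def using ui by (simp add: ipn_smult_left)
    also have "ipn n y y = of_real (l i) * of_real (l i)" unfolding y_def using ui uu
      by (simp add: ipn_smult_left ipn_smult_right)
    finally have e: "ipn n (x + y) (x + y) = ipn n x x + of_real (l i) * ipn n x (u i) +
        (of_real (l i) * ipn n (u i) x + of_real (l i) * of_real (l i))" .
    have "Re (ipn n x (u i)) = Re (ipn n (u i) x)" using ipn_cnj[of n x "u i"] by simp
    then have "Re (ipn n (x + y) (x + y)) = Re (ipn n x x) + 2 * l i * Re (ipn n (u i) x) + l i * l i"
      unfolding e by simp
    moreover have "Re (ipn n (u i) x) \<ge> 0" unfolding x_def by (rule Spos[OF ui])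
    ultimately have "Re (ipn n (x + y) (x + y)) > Re (ipn n x x)" using lp
      by (smt (verit) mult_nonneg_nonneg mult_pos_pos)
    then show False using sq[OF ui] unfolding Hu x_def by simp
  qed
  have "ipn n psi (X *\<^sub>v psi) = of_real (\<Sum>i<n. l i * (cmod (ipn n (u i) psi))\<^sup>2)"
    by (rule quad_form[OF HX on _ psi]) (use ev in simp)
  then have "Re (ipn n psi (X *\<^sub>v psi)) = (\<Sum>i<n. l i * (cmod (ipn n (u i) psi))\<^sup>2)"
    by (simp only: Re_complex_of_real)
  also have "\<dots> \<le> 0" using lneg by (intro sum_nonpos) (simp add: mult_nonpos_nonneg)
  finally have "Re (ipn n psi (X *\<^sub>v psi)) \<le> 0" .
  moreover have "ipn n psi (X *\<^sub>v psi) = ipn n psi (H *\<^sub>v psi) - ipn n psi (S *\<^sub>v psi)"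
    unfolding Xv[OF psi] using Hc Sc psi by (simp add: ipn_minus_right)
  ultimately show ?thesis by simp
qed

theorem mainTheorem5:
  fixes d :: nat and psi :: "complex vec" and P1 P2 :: "complex mat"
  assumes "psi \<in> carrier_vec d"
    and "P1 \<in> carrier_mat d d" and "P2 \<in> carrier_mat d d"
    and "psd P1" and "psd P2"
  shows "(Re (braket psi P1))\<^sup>2 + (Re (braket psi P2))\<^sup>2
           \<le> (Re (braket psi (psd_sqrt (P1 * P1 + P2 * P2))))\<^sup>2"
proof -
  note psi = assms(1) and P1c = assms(2) and P2c = assms(3)
  have H1: "herm d P1" using adjoint_herm[OF P1c] assms(4) unfolding psd_def by simp
  have H2: "herm d P2" using adjoint_herm[OF P2c] assms(5) unfolding psd_def by simp
  define A where "A = P1 * P1 + P2 * P2"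
  have HA: "herm d A" unfolding A_def by (intro herm_add herm_mult_self H1 H2)
  have Ac: "A \<in> carrier_mat d d" using HA by (rule herm_carrier)
  have Aform: "ipn d v (A *\<^sub>v v) = ipn d (P1 *\<^sub>v v) (P1 *\<^sub>v v) + ipn d (P2 *\<^sub>v v) (P2 *\<^sub>v v)"
    if v: "v \<in> carrier_vec d" for v
  proof -
    have "A *\<^sub>v v = (P1 * P1) *\<^sub>v v + (P2 * P2) *\<^sub>v v"
      unfolding A_def by (rule add_mult_distrib_mat_vec[of _ d d]) (use P1c P2c v in auto)
    also have "\<dots> = P1 *\<^sub>v (P1 *\<^sub>v v) + P2 *\<^sub>v (P2 *\<^sub>v v)" using P1c P2c v by simp
    finally have "A *\<^sub>v v = P1 *\<^sub>v (P1 *\<^sub>v v) + P2 *\<^sub>v (P2 *\<^sub>v v)" .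
    then have "ipn d v (A *\<^sub>v v) = ipn d v (P1 *\<^sub>v (P1 *\<^sub>v v)) + ipn d v (P2 *\<^sub>v (P2 *\<^sub>v v))"
      using P1c P2c v by (simp add: ipn_add_right)
    also have "ipn d v (P1 *\<^sub>v (P1 *\<^sub>v v)) = ipn d (P1 *\<^sub>v v) (P1 *\<^sub>v v)"
      using herm_ip[OF H1 v, of "P1 *\<^sub>v v"] P1c v by simp
    also have "ipn d v (P2 *\<^sub>v (P2 *\<^sub>v v)) = ipn d (P2 *\<^sub>v v) (P2 *\<^sub>v v)"
      using herm_ip[OF H2 v, of "P2 *\<^sub>v v"] P2c v by simp
    finally show ?thesis .
  qed
  have Apos: "Re (ipn d v (A *\<^sub>v v)) \<ge> 0" if v: "v \<in> carrier_vec d" for v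
    using Aform[OF v] ipn_self_nonneg(1)[of d "P1 *\<^sub>v v"] ipn_self_nonneg(1)[of d "P2 *\<^sub>v v"] by simp
  define S where "S = psd_sqrt A"
  have Sprop: "psd S \<and> dim_row S = dim_row A \<and> S * S = A"
    unfolding S_def psd_sqrt_def by (rule theI'[OF sqrt_ex1[OF HA Apos]])
  have Sd: "dim_row S = d" using Sprop Ac by simp
  have HS: "herm d S" and Spos: "\<And>v. v \<in> carrier_vec d \<Longrightarrow> Re (ipn d v (S *\<^sub>v v)) \<ge> 0"
    using psd_herm[OF _ Sd] Sprop by auto
  have Sc: "S \<in> carrier_mat d d" using HS by (rule herm_carrier)
  have SS: "ipn d (S *\<^sub>v v) (S *\<^sub>v v) = ipn d v (A *\<^sub>v v)" if v: "v \<in> carrier_vec d" for v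
  proof -
    have "ipn d (S *\<^sub>v v) (S *\<^sub>v v) = ipn d v (S *\<^sub>v (S *\<^sub>v v))" using herm_ip[OF HS v, of "S *\<^sub>v v"] Sc v by simp
    also have "S *\<^sub>v (S *\<^sub>v v) = A *\<^sub>v v" using Sprop Sc v assoc_mult_mat_vec[OF Sc Sc v] by simp
    finally show ?thesis .
  qed
  define a1 where "a1 = Re (ipn d psi (P1 *\<^sub>v psi))"
  define a2 where "a2 = Re (ipn d psi (P2 *\<^sub>v psi))"
  define b where "b = Re (ipn d psi (S *\<^sub>v psi))"
  have lhs: "Re (braket psi P1) = a1" "Re (braket psi P2) = a2"
    unfolding a1_def a2_def using braket_ipn[OF psi] by auto
  have rhs: "Re (braket psi (psd_sqrt (P1 * P1 + P2 * P2))) = b"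
    unfolding b_def S_def A_def using braket_ipn[OF psi] by auto
  have "a1\<^sup>2 + a2\<^sup>2 \<le> b\<^sup>2"
  proof (cases "a1\<^sup>2 + a2\<^sup>2 = 0")
    case True then show ?thesis by simp
  next
    case False
    define r where "r = sqrt (a1\<^sup>2 + a2\<^sup>2)"
    have rpos: "r > 0" unfolding r_def using False by (simp add: add_nonneg_nonneg)
      (metis False add_nonneg_nonneg less_eq_real_def real_sqrt_gt_0_iff zero_le_power2)
    have rsq: "r\<^sup>2 = a1\<^sup>2 + a2\<^sup>2" unfolding r_def by simp
    define c where "c = a1 / r"
    define s where "s = a2 / r"
    have "c\<^sup>2 + s\<^sup>2 = (a1\<^sup>2 + a2\<^sup>2) / r\<^sup>2" unfolding c_def s_def
      by (simp add: power_divide add_divide_distrib)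
    also have "\<dots> = 1" unfolding rsq using False by simp
    finally have cs: "c\<^sup>2 + s\<^sup>2 = 1" .
    define H where "H = complex_of_real c \<cdot>\<^sub>m P1 + complex_of_real s \<cdot>\<^sub>m P2"
    have HH: "herm d H" unfolding H_def by (intro herm_add herm_smult H1 H2)
    have Hv: "H *\<^sub>v v = of_real c \<cdot>\<^sub>v (P1 *\<^sub>v v) + of_real s \<cdot>\<^sub>v (P2 *\<^sub>v v)" if v: "v \<in> carrier_vec d" for v
      unfolding H_def using P1c P2c v
      by (simp add: add_mult_distrib_mat_vec[of _ d d] smult_mat_vec)
    have sq: "Re (ipn d (H *\<^sub>v v) (H *\<^sub>v v)) \<le> Re (ipn d (S *\<^sub>v v) (S *\<^sub>v v))"
      if v: "v \<in> carrier_vec d" for v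
    proof -
      have "Re (ipn d (H *\<^sub>v v) (H *\<^sub>v v)) \<le> Re (ipn d (P1 *\<^sub>v v) (P1 *\<^sub>v v)) + Re (ipn d (P2 *\<^sub>v v) (P2 *\<^sub>v v))"
        unfolding Hv[OF v] by (rule norm_comb[OF cs]) (use P1c P2c v in auto)
      also have "\<dots> = Re (ipn d (S *\<^sub>v v) (S *\<^sub>v v))" using SS[OF v] Aform[OF v] by simp
      finally show ?thesis .
    qed
    have le: "Re (ipn d psi (H *\<^sub>v psi)) \<le> b"
      unfolding b_def by (rule le_of_sq_le[OF HH HS Spos sq psi])
    have "ipn d psi (H *\<^sub>v psi) = of_real c * ipn d psi (P1 *\<^sub>v psi) + of_real s * ipn d psi (P2 *\<^sub>v psi)"
      unfolding Hv[OF psi] using P1c P2c psi by (simp add: ipn_add_right ipn_smult_right)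
    then have "Re (ipn d psi (H *\<^sub>v psi)) = c * a1 + s * a2" unfolding a1_def a2_def by simp
    also have "c * a1 + s * a2 = r" unfolding c_def s_def using rpos rsq
      by (simp add: field_simps power2_eq_square)
    finally have "r \<le> b" using le by simp
    then have "r\<^sup>2 \<le> b\<^sup>2" using rpos by (intro power_mono) auto
    then show ?thesis using rsq by simp
  qed
  then show ?thesis using lhs rhs by simp
qed

end
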